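(* Let $(G,X)$ be an augmented birack of characteristic $N$. For each $n$, let $C^D_n(X)\subseteq C_n(X)$ be the subgroup of $N$-degenerate chains. Then $\partial_n(C^D_n(X))\subseteq C^D_{n-1}(X)$ for all $n$, i.e. the $N$-degenerate chains form a subcomplex of $(C_\bullet(X),\partial)$.
   Context: Augmented birack: Let $X$ be a set and $G$ a subgroup of the group of bijections $X\to X$ (products in $G$ are compositions). An augmented birack structure on $(G,X)$ consists of maps $\alpha,\beta,\overline{\alpha},\overline{\beta}:X\to G$, written $x\mapsto \alpha_x,\beta_x,\overline{\alpha}_x,\overline{\beta}_x$, and an element $\pi\in G$ such that: (i) for all $x\in X$, $\alpha_{\pi(x)}(x)=\beta_x(\pi(x))$ and $\overline{\beta}_{\pi(x)}(x)=\overline{\alpha}_x(\pi(x))$; (ii) for all $x,y\in X$, $\overline{\alpha}_{\beta_x(y)}(\alpha_y(x))=x$, $\overline{\beta}_{\alpha_x(y)}(\beta_y(x))=x$, $\alpha_{\overline{\beta}_x(y)}(\overline{\alpha}_y(x))=x$, $\beta_{\overline{\alpha}_x(y)}(\overline{\beta}_y(x))=x$; (iii) for all $x,y\in X$, $\alpha_{\alpha_x(y)}\alpha_x=\alpha_{\beta_y(x)}\alpha_y$, $\beta_{\alpha_x(y)}\alpha_x=\alpha_{\beta_y(x)}\beta_y$, $\beta_{\alpha_x(y)}\beta_x=\beta_{\beta_y(x)}\beta_y$. The characteristic $N$ is the smallest positive integer with $\pi^N=\mathrm{id}_X$ (assumed to exist, e.g. $X$ finite). Chains: $C_n(X)=\mathbb{Z}[X^n]$;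 for $\vec x=(x_1,\dots,x_n)$ and $1\le k\le n$: $\partial'_k(\vec x)=(x_1,\dots,x_{k-1},x_{k+1},\dots,x_n)$, $\partial''_k(\vec x)=(\beta_{x_k}(x_1),\dots,\beta_{x_k}(x_{k-1}),\alpha_{x_k}(x_{k+1}),\dots,\alpha_{x_k}(x_n))$, and $\partial_n(\vec x)=\sum_{k=1}^n(-1)^k(\partial'_k(\vec x)-\partial''_k(\vec x))$, extended linearly. An element of $C_n(X)$ is $N$-degenerate if it is a $\mathbb{Z}$-linear combination of elements of the form $\sum_{k=1}^N(x_1,\dots,x_{j-1},\pi^k(x_j),\pi^{k-1}(x_j),x_{j+2},\dots,x_n)$ with $1\le j\le n-1$ and $x_i\in X$; $C^D_n(X)$ denotes the group of $N$-degenerate $n$-chains. *)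

theory Defs
  imports "HOL-Library.Poly_Mapping"
begin

(* The set X is modelled by the type 'x.  G is a set of bijections 'x => 'x forming
   a subgroup of the symmetric group under composition. *)
definition bij_subgroup :: "('x \<Rightarrow> 'x) set \<Rightarrow> bool" where
  "bij_subgroup G \<longleftrightarrow> G \<subseteq> {f. bij f} \<and> id \<in> G
     \<and> (\<forall>f\<in>G. \<forall>g\<in>G. f \<circ> g \<in> G) \<and> (\<forall>f\<in>G. inv f \<in> G)"

(* augmented birack structure (alpha, beta, alpha-bar, beta-bar, pi) on (G, X);
   alpha x denotes alpha_x etc. *)
definition augmented_birack ::
  "('x \<Rightarrow> 'x) set \<Rightarrow> ('x \<Rightarrow> 'x \<Rightarrow> 'x) \<Rightarrow> ('x \<Rightarrow> 'x \<Rightarrow> 'x) \<Rightarrow>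
   ('x \<Rightarrow> 'x \<Rightarrow> 'x) \<Rightarrow> ('x \<Rightarrow> 'x \<Rightarrow> 'x) \<Rightarrow> ('x \<Rightarrow> 'x) \<Rightarrow> bool" where
  "augmented_birack G \<alpha> \<beta> \<alpha>b \<beta>b \<pi> \<longleftrightarrow>
     bij_subgroup G \<and>
     (\<forall>x. \<alpha> x \<in> G \<and> \<beta> x \<in> G \<and> \<alpha>b x \<in> G \<and> \<beta>b x \<in> G) \<and> \<pi> \<in> G \<and>
     (\<forall>x. \<alpha> (\<pi> x) x = \<beta> x (\<pi> x) \<and> \<beta>b (\<pi> x) x = \<alpha>b x (\<pi> x)) \<and>
     (\<forall>x y. \<alpha>b (\<beta> x y) (\<alpha> y x) = x \<and> \<beta>b (\<alpha> x y) (\<beta> y x) = x \<and>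
            \<alpha> (\<beta>b x y) (\<alpha>b y x) = x \<and> \<beta> (\<alpha>b x y) (\<beta>b y x) = x) \<and>
     (\<forall>x y. \<alpha> (\<alpha> x y) \<circ> \<alpha> x = \<alpha> (\<beta> y x) \<circ> \<alpha> y \<and>
            \<beta> (\<alpha> x y) \<circ> \<alpha> x = \<alpha> (\<beta> y x) \<circ> \<beta> y \<and>
            \<beta> (\<alpha> x y) \<circ> \<beta> x = \<beta> (\<beta> y x) \<circ> \<beta> y)"

definition characteristic :: "('x \<Rightarrow> 'x) \<Rightarrow> nat" where
  "characteristic \<pi> = (LEAST N. 0 < N \<and> (\<pi> ^^ N) = id)"

(* Chains: C_n(X) = Z[X^n] is modelled inside 'x list \<Rightarrow>\<^sub>0 int (finitely supported
   integer combinations of tuples, tuples = lists); an n-chain is supported on lists of length n. *)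

(* face maps, 0-indexed: index k here corresponds to k+1 in the paper *)
definition face1 :: "nat \<Rightarrow> 'x list \<Rightarrow> 'x list" where
  "face1 k xs = take k xs @ drop (Suc k) xs"

definition face2 :: "('x \<Rightarrow> 'x \<Rightarrow> 'x) \<Rightarrow> ('x \<Rightarrow> 'x \<Rightarrow> 'x) \<Rightarrow> nat \<Rightarrow> 'x list \<Rightarrow> 'x list" where
  "face2 \<alpha> \<beta> k xs = map (\<beta> (xs ! k)) (take k xs) @ map (\<alpha> (xs ! k)) (drop (Suc k) xs)"

definition bd_basis :: "('x \<Rightarrow> 'x \<Rightarrow> 'x) \<Rightarrow> ('x \<Rightarrow> 'x \<Rightarrow> 'x) \<Rightarrow> 'x list \<Rightarrow> 'x list \<Rightarrow>\<^sub>0 int" where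
  "bd_basis \<alpha> \<beta> xs = (\<Sum>k<length xs. frag_cmul ((-1) ^ (Suc k))
       (frag_of (face1 k xs) - frag_of (face2 \<alpha> \<beta> k xs)))"

definition bd :: "('x \<Rightarrow> 'x \<Rightarrow> 'x) \<Rightarrow> ('x \<Rightarrow> 'x \<Rightarrow> 'x) \<Rightarrow> ('x list \<Rightarrow>\<^sub>0 int) \<Rightarrow> 'x list \<Rightarrow>\<^sub>0 int" where
  "bd \<alpha> \<beta> = frag_extend (bd_basis \<alpha> \<beta>)"

(* generators of N-degenerate n-chains:
   sum_{k=1..N} (x_1,...,x_{j-1}, pi^k(x_j), pi^(k-1)(x_j), x_{j+2},...,x_n),
   with ys = (x_1..x_{j-1}), zs = (x_{j+2}..x_n), 1 <= j <= n-1 *)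
definition degen_gen :: "('x \<Rightarrow> 'x) \<Rightarrow> nat \<Rightarrow> 'x list \<Rightarrow> 'x \<Rightarrow> 'x list \<Rightarrow> 'x list \<Rightarrow>\<^sub>0 int" where
  "degen_gen \<pi> N ys x zs = (\<Sum>k\<in>{1..N}. frag_of (ys @ (\<pi> ^^ k) x # (\<pi> ^^ (k - 1)) x # zs))"

inductive_set degen_chains :: "('x \<Rightarrow> 'x) \<Rightarrow> nat \<Rightarrow> nat \<Rightarrow> ('x list \<Rightarrow>\<^sub>0 int) set"
  for \<pi> :: "'x \<Rightarrow> 'x" and N :: nat and n :: nat where
  zero: "0 \<in> degen_chains \<pi> N n"
| gen: "length ys + 2 + length zs = n \<Longrightarrow> degen_gen \<pi> N ys x zs \<in> degen_chains \<pi> N n"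
| diff: "a \<in> degen_chains \<pi> N n \<Longrightarrow> b \<in> degen_chains \<pi> N n \<Longrightarrow> a - b \<in> degen_chains \<pi> N n"

end

theory Submission imports Defs begin

locale abk =
  fixes \<alpha> \<beta> :: "'x \<Rightarrow> 'x \<Rightarrow> 'x" and \<pi> :: "'x \<Rightarrow> 'x" and N :: nat
  assumes injA: "\<And>x. inj (\<alpha> x)" and injB: "\<And>x. inj (\<beta> x)"
    and kink: "\<And>x. \<alpha> (\<pi> x) x = \<beta> x (\<pi> x)"
    and e1: "\<And>x y z. \<alpha> (\<alpha> x y) (\<alpha> x z) = \<alpha> (\<beta> y x) (\<alpha> y z)"
    and e2: "\<And>x y z. \<beta> (\<alpha> x y) (\<alpha> x z) = \<alpha> (\<beta> y x) (\<beta> y z)"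
    and e3: "\<And>x y z. \<beta> (\<alpha> x y) (\<beta> x z) = \<beta> (\<beta> y x) (\<beta> y z)"
    and piN: "(\<pi> ^^ N) = id" and Npos: "0 < N"
begin

lemma alpha_pi: "\<alpha> (\<pi> x) = \<alpha> x"
proof
  fix z
  have "\<alpha> (\<alpha> (\<pi> x) x) (\<alpha> (\<pi> x) z) = \<alpha> (\<beta> x (\<pi> x)) (\<alpha> x z)" by (rule e1)
  then have "\<alpha> (\<alpha> (\<pi> x) x) (\<alpha> (\<pi> x) z) = \<alpha> (\<alpha> (\<pi> x) x) (\<alpha> x z)" by (simp add: kink)
  then show "\<alpha> (\<pi> x) z = \<alpha> x z" using injA by (meson injD)
qed

lemma beta_pi: "\<beta> (\<pi> x) = \<beta> x"
proof
  fix z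
  have "\<beta> (\<alpha> (\<pi> x) x) (\<beta> (\<pi> x) z) = \<beta> (\<beta> x (\<pi> x)) (\<beta> x z)" by (rule e3)
  then have "\<beta> (\<alpha> (\<pi> x) x) (\<beta> (\<pi> x) z) = \<beta> (\<alpha> (\<pi> x) x) (\<beta> x z)" by (simp add: kink)
  then show "\<beta> (\<pi> x) z = \<beta> x z" using injB by (meson injD)
qed

lemma kink2: "\<beta> x (\<pi> x) = \<alpha> x x"
  using kink[of x] alpha_pi[of x] by simp

lemma pi_uniq: "\<beta> x z = \<alpha> x x \<Longrightarrow> z = \<pi> x"
  using kink2[of x] injB by (metis injD)

lemma alpha_comm: "\<pi> (\<alpha> y x) = \<alpha> y (\<pi> x)"
proof -
  have "\<beta> (\<alpha> y x) (\<alpha> y (\<pi> x)) = \<alpha> (\<beta> x y) (\<beta> x (\<pi> x))" by (rule e2)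
  also have "\<dots> = \<alpha> (\<beta> x y) (\<alpha> x x)" by (simp add: kink2)
  also have "\<dots> = \<alpha> (\<alpha> y x) (\<alpha> y x)" by (rule e1[symmetric])
  finally show ?thesis using pi_uniq by metis
qed

lemma beta_comm: "\<pi> (\<beta> y x) = \<beta> y (\<pi> x)"
proof -
  have "\<beta> (\<beta> y x) (\<beta> y (\<pi> x)) = \<beta> (\<alpha> x y) (\<beta> x (\<pi> x))" by (rule e3[symmetric])
  also have "\<dots> = \<beta> (\<alpha> x y) (\<alpha> x x)" by (simp add: kink2)
  also have "\<dots> = \<alpha> (\<beta> y x) (\<beta> y x)" by (rule e2)
  finally show ?thesis using pi_uniq by metis
qed

lemma alpha_commk: "\<alpha> y ((\<pi> ^^ k) x) = (\<pi> ^^ k) (\<alpha> y x)"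
  by (induction k) (simp_all add: alpha_comm[symmetric])

lemma beta_commk: "\<beta> y ((\<pi> ^^ k) x) = (\<pi> ^^ k) (\<beta> y x)"
  by (induction k) (simp_all add: beta_comm[symmetric])


lemma alpha_pik: "\<alpha> ((\<pi> ^^ k) x) = \<alpha> x"
  by (induction k) (simp_all add: alpha_pi)
lemma beta_pik: "\<beta> ((\<pi> ^^ k) x) = \<beta> x"
  by (induction k) (simp_all add: beta_pi)

abbreviation D where "D n \<equiv> degen_chains \<pi> N n"

lemma D_neg: "a \<in> D n \<Longrightarrow> -a \<in> D n"
  using degen_chains.diff[OF degen_chains.zero, of a] by simp
lemma D_add: "a \<in> D n \<Longrightarrow> b \<in> D n \<Longrightarrow> a + b \<in> D n"
  using degen_chains.diff[of a _ _ _ "-b"] D_neg by fastforce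
lemma D_sum: "(\<And>i. i \<in> I \<Longrightarrow> f i \<in> D n) \<Longrightarrow> sum f I \<in> D n"
  by (induction I rule: infinite_finite_induct) (auto intro: D_add degen_chains.zero)
lemma D_sign: "a \<in> D n \<Longrightarrow> frag_cmul ((-1)^i) a \<in> D n"
  by (cases "even i") (auto intro: D_neg)


lemma swap_gen: "(\<Sum>k\<in>A. \<Sum>i\<in>B. f k i) = (\<Sum>i\<in>B. \<Sum>k\<in>A. f k i)"
  by (rule sum.swap)

lemma comb:
  assumes "Suc p < n" "\<And>i. i<n \<Longrightarrow> i \<noteq> p \<Longrightarrow> i \<noteq> Suc p \<Longrightarrow> T i \<in> D m" "T p = T (Suc p)"
  shows "(\<Sum>i<n. frag_cmul ((-1)^Suc i) (T i)) \<in> D m"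
proof -
  have e: "{..<n} = insert p (insert (Suc p) ({..<n} - {p, Suc p}))" using assms(1) by auto
  have z: "frag_cmul ((-1)^Suc p) (T p) + frag_cmul ((-1)^Suc (Suc p)) (T (Suc p)) = 0"
    using assms(3) by (simp add: frag_cmul_distrib[symmetric])
  have "(\<Sum>i<n. frag_cmul ((-1)^Suc i) (T i)) =
     frag_cmul ((-1)^Suc p) (T p) + (frag_cmul ((-1)^Suc (Suc p)) (T (Suc p)) +
       (\<Sum>i\<in>{..<n} - {p, Suc p}. frag_cmul ((-1)^Suc i) (T i)))"
    by (subst e) (simp add: sum.insert)
  also have "\<dots> = (\<Sum>i\<in>{..<n} - {p, Suc p}. frag_cmul ((-1)^Suc i) (T i))"
    using z by (simp add: add.assoc[symmetric])
  also have "\<dots> \<in> D m" apply (rule D_sum) apply (rule D_sign) using assms(2) by auto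
  finally show ?thesis .
qed

lemma gen_bd:
  assumes len: "length ys + 2 + length zs = n"
  shows "bd \<alpha> \<beta> (degen_gen \<pi> N ys x zs) \<in> D (n-1)"
proof -
  define p where "p = length ys"
  define L where "L k = ys @ (\<pi>^^k) x # (\<pi>^^(k-1)) x # zs" for k
  define T where "T i = (\<Sum>k\<in>{1..N}. frag_of (face1 i (L k)) - frag_of (face2 \<alpha> \<beta> i (L k)))" for i
  have lenL: "length (L k) = n" for k using len by (simp add: L_def)
  have "bd \<alpha> \<beta> (degen_gen \<pi> N ys x zs) = (\<Sum>k\<in>{1..N}. bd_basis \<alpha> \<beta> (L k))"
    by (simp add: bd_def degen_gen_def frag_extend_sum L_def o_def)
  also have "\<dots> = (\<Sum>k\<in>{1..N}. \<Sum>i<n. frag_cmul ((-1)^Suc i) (frag_of (face1 i (L k)) - frag_of (face2 \<alpha> \<beta> i (L k))))"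
    by (simp add: bd_basis_def lenL)
  also have "\<dots> = (\<Sum>i<n. frag_cmul ((-1)^Suc i) (T i))"
    unfolding T_def frag_cmul_sum
    by (rule swap_gen)
  also have "\<dots> \<in> D (n-1)"
  proof (rule comb)
    show "Suc p < n" using len p_def by simp
  next
    fix i assume i: "i < n" "i \<noteq> p" "i \<noteq> Suc p"
    show "T i \<in> D (n-1)"
    proof (cases "i < p")
      case True
      define y where "y = ys ! i"
      define ys' where "ys' = map (\<beta> y) (take i ys) @ map (\<alpha> y) (drop (Suc i) ys)"
      have f1: "face1 i (L k) = face1 i ys @ (\<pi>^^k) x # (\<pi>^^(k-1)) x # zs" for k
        using True p_def by (simp add: face1_def L_def)
      have f2: "face2 \<alpha> \<beta> i (L k) = ys' @ (\<pi>^^k) (\<alpha> y x) # (\<pi>^^(k-1)) (\<alpha> y x) # map (\<alpha> y) zs" for k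
        using True p_def by (simp add: face2_def L_def ys'_def y_def nth_append alpha_commk)
      have "T i = degen_gen \<pi> N (face1 i ys) x zs - degen_gen \<pi> N ys' (\<alpha> y x) (map (\<alpha> y) zs)"
        by (simp add: T_def f1 f2 degen_gen_def sum_subtractf)
      moreover have "length (face1 i ys) + 2 + length zs = n - 1"
        using True p_def len by (simp add: face1_def)
      moreover have "length ys' + 2 + length (map (\<alpha> y) zs) = n - 1"
        using True p_def len by (simp add: ys'_def)
      ultimately show ?thesis using degen_chains.diff[OF degen_chains.gen degen_chains.gen] by metis
    next
      case False
      have "Suc (Suc p) \<le> i" using False i(2,3) by linarith
      then obtain j where j: "i = Suc (Suc (p + j))" by (auto dest!: le_Suc_ex)
      have jm: "j < length zs" using j i len p_def by simp
      define z where "z = zs ! j"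
      define zs' where "zs' = map (\<beta> z) (take j zs) @ map (\<alpha> z) (drop (Suc j) zs)"
      have f1: "face1 i (L k) = ys @ (\<pi>^^k) x # (\<pi>^^(k-1)) x # face1 j zs" for k
        using j p_def by (simp add: face1_def L_def eval_nat_numeral)
      have f2: "face2 \<alpha> \<beta> i (L k) = map (\<beta> z) ys @ (\<pi>^^k) (\<beta> z x) # (\<pi>^^(k-1)) (\<beta> z x) # zs'" for k
        using j p_def by (simp add: face2_def L_def zs'_def z_def nth_append beta_commk eval_nat_numeral)
      have "T i = degen_gen \<pi> N ys x (face1 j zs) - degen_gen \<pi> N (map (\<beta> z) ys) (\<beta> z x) zs'"
        by (simp add: T_def f1 f2 degen_gen_def sum_subtractf)
      moreover have "length ys + 2 + length (face1 j zs) = n - 1"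
        using jm len by (simp add: face1_def)
      moreover have "length (map (\<beta> z) ys) + 2 + length zs' = n - 1"
        using jm len by (simp add: zs'_def)
      ultimately show ?thesis using degen_chains.diff[OF degen_chains.gen degen_chains.gen] by metis
    qed
  next
    define g where "g k = frag_of (ys @ (\<pi>^^k) x # zs)" for k
    have a1: "face1 p (L k) = ys @ (\<pi>^^(k-1)) x # zs" for k
      using p_def by (simp add: face1_def L_def)
    have a2: "face1 (Suc p) (L k) = ys @ (\<pi>^^k) x # zs" for k
      using p_def by (simp add: face1_def L_def)
    have b: "face2 \<alpha> \<beta> p (L k) = face2 \<alpha> \<beta> (Suc p) (L k)" if k1: "k \<in> {1..N}" for k
    proof -
      obtain k' where k: "k = Suc k'" using k1 by (cases k) auto
      define w where "w = (\<pi>^^k') x"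
      have Lk: "L k = ys @ \<pi> w # w # zs" by (simp add: L_def k w_def)
      show ?thesis using p_def
        by (simp add: Lk face2_def alpha_pi beta_pi kink kink2 nth_append)
    qed
    obtain M where M: "N = Suc M" using Npos by (cases N) auto
    have "(\<Sum>k\<in>{1..N}. g (k-1)) = (\<Sum>k<N. g k)"
      by (simp add: sum.atLeast1_atMost_eq)
    also have "\<dots> = g 0 + (\<Sum>k<M. g (Suc k))" unfolding M by (rule sum.lessThan_Suc_shift)
    also have "\<dots> = (\<Sum>k<M. g (Suc k)) + g N"
      using piN by (simp add: g_def)
    also have "\<dots> = (\<Sum>k\<in>{1..N}. g k)" by (simp add: M sum.atLeast1_atMost_eq)
    finally have s: "(\<Sum>k\<in>{1..N}. g (k-1)) = (\<Sum>k\<in>{1..N}. g k)" .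
    have c1: "(\<Sum>k\<in>{1..N}. frag_of (face1 p (L k))) = (\<Sum>k\<in>{1..N}. frag_of (face1 (Suc p) (L k)))"
      using s by (simp add: a1 a2 g_def)
    have c2: "(\<Sum>k\<in>{1..N}. frag_of (face2 \<alpha> \<beta> p (L k))) = (\<Sum>k\<in>{1..N}. frag_of (face2 \<alpha> \<beta> (Suc p) (L k)))"
      by (rule sum.cong) (simp_all add: b)
    show "T p = T (Suc p)"
      unfolding T_def sum_subtractf c1 c2 ..
  qed
  finally show ?thesis .
qed

lemma bd_D: "c \<in> D n \<Longrightarrow> bd \<alpha> \<beta> c \<in> D (n - 1)"
proof (induction rule: degen_chains.induct)
  case zero then show ?case by (simp add: bd_def degen_chains.zero)
next
  case (gen ys zs x) then show ?case by (rule gen_bd)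
next
  case (diff a b) then show ?case by (simp add: bd_def frag_extend_diff degen_chains.diff)
qed

end

theorem mainTheorem12:
  fixes G :: "('x \<Rightarrow> 'x) set" and \<alpha> \<beta> \<alpha>b \<beta>b :: "'x \<Rightarrow> 'x \<Rightarrow> 'x" and \<pi> :: "'x \<Rightarrow> 'x"
  assumes "augmented_birack G \<alpha> \<beta> \<alpha>b \<beta>b \<pi>"
    and "\<exists>M>0. (\<pi> ^^ M) = id"
    and "N = characteristic \<pi>"
  shows "\<forall>n. \<forall>c\<in>degen_chains \<pi> N n. bd \<alpha> \<beta> c \<in> degen_chains \<pi> N (n - 1)"
proof -
  have NN: "0 < N \<and> (\<pi> ^^ N) = id"
    unfolding assms(3) characteristic_def using assms(2) by (rule LeastI_ex)
  have ab: "bij_subgroup G" "\<And>x. \<alpha> x \<in> G \<and> \<beta> x \<in> G"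
    "\<And>x. \<alpha> (\<pi> x) x = \<beta> x (\<pi> x)"
    "\<And>x y. \<alpha> (\<alpha> x y) \<circ> \<alpha> x = \<alpha> (\<beta> y x) \<circ> \<alpha> y \<and>
            \<beta> (\<alpha> x y) \<circ> \<alpha> x = \<alpha> (\<beta> y x) \<circ> \<beta> y \<and>
            \<beta> (\<alpha> x y) \<circ> \<beta> x = \<beta> (\<beta> y x) \<circ> \<beta> y"
    using assms(1) unfolding augmented_birack_def by blast+
  have bijs: "bij (\<alpha> x)" "bij (\<beta> x)" for x
    using ab(1) ab(2)[of x] unfolding bij_subgroup_def by blast+
  interpret abk \<alpha> \<beta> \<pi> N
  proof
    show "inj (\<alpha> x)" "inj (\<beta> x)" for x using bijs bij_is_inj by blast+
    show "\<alpha> (\<pi> x) x = \<beta> x (\<pi> x)" for x by (rule ab(3))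
    show "\<alpha> (\<alpha> x y) (\<alpha> x z) = \<alpha> (\<beta> y x) (\<alpha> y z)" for x y z
      using ab(4)[of x y] by (metis comp_apply)
    show "\<beta> (\<alpha> x y) (\<alpha> x z) = \<alpha> (\<beta> y x) (\<beta> y z)" for x y z
      using ab(4)[of x y] by (metis comp_apply)
    show "\<beta> (\<alpha> x y) (\<beta> x z) = \<beta> (\<beta> y x) (\<beta> y z)" for x y z
      using ab(4)[of x y] by (metis comp_apply)
  qed (use NN in auto)
  show ?thesis using bd_D by blast
qed

end
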